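(* Let $(M,d)$ be a metric space and let $\mathcal S$ be a semigroup (under composition) of self-mappings of $M$ generated by a family of uniformly asymptotically regular mappings. Suppose $\mathcal S$ is subsurjective, i.e. there is a nonempty set $D\subset M$ such that $T(D)=D$ for every $T\in\mathcal S$. Then $\mathcal S$ has a common fixed point: there is $x\in M$ with $Tx=x$ for all $T\in\mathcal S$.
   Context: A mapping $T:M\to M$ is uniformly asymptotically regular if $\lim_{n\to\infty}\sup_{x\in M} d(T^{n+1}x,T^{n}x)=0$. *)

theory Defs
  imports "HOL-Analysis.Analysis"
begin

definition unif_asym_reg :: "('a::metric_space \<Rightarrow> 'a) \<Rightarrow> bool" where
  "unif_asym_reg T \<longleftrightarrow>
     (\<lambda>n. SUP x. ereal (dist ((T ^^ Suc n) x) ((T ^^ n) x))) \<longlonglongrightarrow> 0"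

inductive_set gen_semigroup :: "('a \<Rightarrow> 'a) set \<Rightarrow> ('a \<Rightarrow> 'a) set" for F where
  base: "T \<in> F \<Longrightarrow> T \<in> gen_semigroup F"
| comp: "S \<in> gen_semigroup F \<Longrightarrow> T \<in> gen_semigroup F \<Longrightarrow> S \<circ> T \<in> gen_semigroup F"

end

theory Submission
  imports Defs
begin

lemma fix_D:
  fixes T :: "'a::metric_space \<Rightarrow> 'a"
  assumes u: "unif_asym_reg T" and TD: "T ` D = D" and x: "x \<in> D"
  shows "T x = x"
proof -
  have pw: "(T ^^ n) ` D = D" for n
  proof (induction n)
    case 0 then show ?case by simp
  next
    case (Suc n)
    have "(T ^^ Suc n) ` D = T ` ((T ^^ n) ` D)" by (simp add: image_comp)
    then show ?case using Suc TD by simp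
  qed
  have "ereal (dist (T x) x) \<le> (SUP y. ereal (dist ((T ^^ Suc n) y) ((T ^^ n) y)))" for n
  proof -
    obtain y where y: "y \<in> D" "(T ^^ n) y = x" using pw[of n] x by (metis imageE)
    have "(T ^^ Suc n) y = T x" using y by simp
    hence "ereal (dist (T x) x) = ereal (dist ((T ^^ Suc n) y) ((T ^^ n) y))" using y by simp
    also have "\<dots> \<le> (SUP y. ereal (dist ((T ^^ Suc n) y) ((T ^^ n) y)))"
      by (rule SUP_upper) simp
    finally show ?thesis .
  qed
  hence "\<exists>N. \<forall>n\<ge>N. ereal (dist (T x) x) \<le> (SUP y. ereal (dist ((T ^^ Suc n) y) ((T ^^ n) y)))"
    by blast
  hence "ereal (dist (T x) x) \<le> 0"
    using u unfolding unif_asym_reg_def by (rule LIMSEQ_le_const[rotated])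
  thus ?thesis by simp
qed

theorem theorem3p10:
  fixes F :: "('a::metric_space \<Rightarrow> 'a) set" and D :: "'a set"
  assumes "\<forall>T\<in>F. unif_asym_reg T"
    and "D \<noteq> {}"
    and "\<forall>T\<in>gen_semigroup F. T ` D = D"
  shows "\<exists>x. \<forall>T\<in>gen_semigroup F. T x = x"
proof -
  obtain x where x: "x \<in> D" using assms(2) by blast
  have "S z = z" if "S \<in> gen_semigroup F" "z \<in> D" for S z
    using that
  proof (induction S arbitrary: z rule: gen_semigroup.induct)
    case (base T)
    have "unif_asym_reg T" using assms(1) base.hyps by blast
    moreover have "T ` D = D" using assms(3) gen_semigroup.base[OF base.hyps] by blast
    ultimately show ?case using fix_D base.prems by blast
  next
    case (comp S T)
    have "T z = z" using comp.IH(2) comp.prems by blast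
    then show ?case using comp.IH(1) comp.prems by (simp add: comp_def)
  qed
  thus ?thesis using x by blast
qed

end
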